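(* Let $D^1$ and $D^2$ be compatible POMDPs. A policy $\pi$ is Pareto optimal for the pair $(D^1,D^2)$ if and only if there exist weights $w^1,w^2\ge0$ with $w^1+w^2=1$ such that $\pi$ is an optimal policy (i.e. maximizes $\mathbb E[U;\pi]$ over all policies) for the single POMDP mixture $w^1D^1+w^2D^2$.
   Context: For $j\in\{1,2\}$, $D^j=(\mathcal S^j,\mathcal A,T^j,U^j,\mathcal O,\Omega^j,n)$ is a POMDP: finite state set $\mathcal S^j$, finite action set $\mathcal A$, finite observation set $\mathcal O$, $n$ time steps, initial distribution $\mathbb P^j(s_1)$, transitions $\mathbb P^j(s_{i+1}\mid s_i,a_i)$, observation probabilities $\mathbb P^j(o_i\mid s_i)$, utility $U^j:(\mathcal S^j)^n\to\mathbb R$. Compatible means same $\mathcal A$, $\mathcal O$, $n$. A policy $\pi=(\pi_1,\dots,\pi_n)$ gives distributions $\pi_i(\cdot\mid o_{\le i},a_{<i})$ on $\mathcal A$; $\mathbb P^j(\bar s,\bar o,\bar a;\pi)=\mathbb P^j(s_1)\prod_{i=1}^n\mathbb P^j(o_i\mid s_i)\pi_i(a_i\mid o_{\le i},a_{<i})\mathbb P^j(s_{i+1}\mid s_i,a_i)$ and $\mathbb E^j[U^j;\pi]=\sum_{\bar s}\mathbb P^j(\bar s;\pi)U^j(\bar s)$. The policy class is closed under mixtures: for policies $\pi_k$ and convex weights $\alpha_k$, $\sum_k\alpha_k\pi_k$ chooses once and for all before any input, with probability $\alpha_k$, to follow $\pi_k$, so that $\mathbb E^j[U^j;\sum_k\alpha_k\pi_k]=\sum_k\alpha_k\mathbb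 E^j[U^j;\pi_k]$. A policy $\pi$ is Pareto optimal for $(D^1,D^2)$ if for every policy $\pi'$, $\mathbb E^1[U^1;\pi]\ge\mathbb E^1[U^1;\pi']$ or $\mathbb E^2[U^2;\pi]\ge\mathbb E^2[U^2;\pi']$. The mixture $D=w^1D^1+w^2D^2$ is the POMDP with the same $\mathcal A,\mathcal O,n$, state set $\mathcal S=\{(j,s):j\in\{1,2\},s\in\mathcal S^j\}$, initial distribution $\mathbb P((j,s_1))=w^j\mathbb P^j(s_1)$, transitions $\mathbb P((j',s_{i+1})\mid(j,s_i),a_i)=\mathbb P^j(s_{i+1}\mid s_i,a_i)$ if $j'=j$ and $0$ otherwise (so $j$ is constant along a history), observation probabilities $\mathbb P(o_i\mid(j,s_i))=\mathbb P^j(o_i\mid s_i)$ (the policy does not observe $j$), and utility $U(j,\bar s)=U^j(\bar s)$. *)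

theory Defs
  imports Complex_Main
begin

text \<open>A finite-horizon POMDP.  The finite state set, action set and observation set
  are the (finite) types 's, 'a, 'o.  Time steps are indexed 0,...,n-1 (paper: 1,...,n).\<close>

record ('s, 'a, 'o) pomdp =
  init    :: "'s \<Rightarrow> real"
  trans   :: "'s \<Rightarrow> 'a \<Rightarrow> 's \<Rightarrow> real"
  obsp    :: "'s \<Rightarrow> 'o \<Rightarrow> real"
  util    :: "'s list \<Rightarrow> real"           \<comment> \<open>U on S^n (lists of length n)\<close>
  horizon :: nat

definition is_pomdp :: "('s::finite, 'a::finite, 'o::finite) pomdp \<Rightarrow> bool" where
  "is_pomdp D \<longleftrightarrow>
     (\<forall>s. init D s \<ge> 0) \<and> (\<Sum>s\<in>UNIV. init D s) = 1 \<and>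
     (\<forall>s a s'. trans D s a s' \<ge> 0) \<and> (\<forall>s a. (\<Sum>s'\<in>UNIV. trans D s a s') = 1) \<and>
     (\<forall>s o'. obsp D s o' \<ge> 0) \<and> (\<forall>s. (\<Sum>o'\<in>UNIV. obsp D s o') = 1)"

text \<open>Compatible: same action and observation sets (enforced by the types) and same n.\<close>
definition compatible :: "('s1, 'a, 'o) pomdp \<Rightarrow> ('s2, 'a, 'o) pomdp \<Rightarrow> bool" where
  "compatible D1 D2 \<longleftrightarrow> horizon D1 = horizon D2"

text \<open>A policy: \<open>\<pi> i os as a\<close> is \<open>\<pi>_i(a | o_{\<le>i}, a_{<i})\<close>, where \<open>os\<close> is the list of
  observations so far (length i+1) and \<open>as\<close> the list of previous actions (length i).\<close>
type_synonym ('o, 'a) policy = "nat \<Rightarrow> 'o list \<Rightarrow> 'a list \<Rightarrow> 'a \<Rightarrow> real"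

definition is_policy :: "nat \<Rightarrow> ('o, 'a::finite) policy \<Rightarrow> bool" where
  "is_policy n \<pi> \<longleftrightarrow>
     (\<forall>i<n. \<forall>os as. (\<forall>a. \<pi> i os as a \<ge> 0) \<and> (\<Sum>a\<in>UNIV. \<pi> i os as a) = 1)"

definition joint_prob ::
  "('s, 'a, 'o) pomdp \<Rightarrow> ('o, 'a) policy \<Rightarrow> 's list \<Rightarrow> 'o list \<Rightarrow> 'a list \<Rightarrow> real" where
  "joint_prob D \<pi> ss os as =
     init D (ss ! 0) *
     (\<Prod>i<horizon D. obsp D (ss ! i) (os ! i) * \<pi> i (take (Suc i) os) (take i as) (as ! i)
                     * trans D (ss ! i) (as ! i) (ss ! Suc i))"

text \<open>\<open>E[U;\<pi>] = \<Sum>_{s\<^sub>1..s\<^sub>n} P(s\<^sub>1..s\<^sub>n;\<pi>) U(s\<^sub>1..s\<^sub>n)\<close>, where the marginal is obtained by summing the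
  joint probability over observations, actions and the final state s_{n+1}.\<close>
definition expected_util :: "('s::finite, 'a::finite, 'o::finite) pomdp \<Rightarrow> ('o, 'a) policy \<Rightarrow> real" where
  "expected_util D \<pi> =
     (\<Sum>ss\<in>{ss. length ss = Suc (horizon D)}.
       \<Sum>os\<in>{os. length os = horizon D}.
         \<Sum>as\<in>{as. length as = horizon D}.
           joint_prob D \<pi> ss os as * util D (take (horizon D) ss))"

definition pareto_optimal ::
  "('s1::finite, 'a::finite, 'o::finite) pomdp \<Rightarrow> ('s2::finite, 'a, 'o) pomdp \<Rightarrow> ('o, 'a) policy \<Rightarrow> bool" where
  "pareto_optimal D1 D2 \<pi> \<longleftrightarrow>
     (\<forall>\<pi>'. is_policy (horizon D1) \<pi>' \<longrightarrow>
        expected_util D1 \<pi> \<ge> expected_util D1 \<pi>' \<or> expected_util D2 \<pi> \<ge> expected_util D2 \<pi>')"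

definition optimal_policy :: "('s::finite, 'a::finite, 'o::finite) pomdp \<Rightarrow> ('o, 'a) policy \<Rightarrow> bool" where
  "optimal_policy D \<pi> \<longleftrightarrow>
     (\<forall>\<pi>'. is_policy (horizon D) \<pi>' \<longrightarrow> expected_util D \<pi> \<ge> expected_util D \<pi>')"

text \<open>The state set \<open>{(j,s)}\<close> is the sum type 's1 + 's2
  (Inl = index 1, Inr = index 2).  Utility of a history with constant index j is U^j of the
  underlying states; histories mixing indices have probability 0 and get utility 0.\<close>
definition mix_util :: "('s1 list \<Rightarrow> real) \<Rightarrow> ('s2 list \<Rightarrow> real) \<Rightarrow> ('s1 + 's2) list \<Rightarrow> real" where
  "mix_util U1 U2 xs =
     (if \<forall>x\<in>set xs. isl x then U1 (map projl xs)
      else if \<forall>x\<in>set xs. \<not> isl x then U2 (map projr xs) else 0)"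

definition mixture ::
  "real \<Rightarrow> ('s1, 'a, 'o) pomdp \<Rightarrow> real \<Rightarrow> ('s2, 'a, 'o) pomdp \<Rightarrow> ('s1 + 's2, 'a, 'o) pomdp" where
  "mixture w1 D1 w2 D2 =
     \<lparr> init = case_sum (\<lambda>s. w1 * init D1 s) (\<lambda>s. w2 * init D2 s),
       trans = (\<lambda>x a y. case (x, y) of
                   (Inl s, Inl s') \<Rightarrow> trans D1 s a s'
                 | (Inr s, Inr s') \<Rightarrow> trans D2 s a s'
                 | _ \<Rightarrow> 0),
       obsp = case_sum (obsp D1) (obsp D2),
       util = mix_util (util D1) (util D2),
       horizon = horizon D1 \<rparr>"

end

theory Submission
  imports Defs
begin


definition Rp :: "('o,'a) policy \<Rightarrow> nat \<Rightarrow> 'o list \<Rightarrow> 'a list \<Rightarrow> real" where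
  "Rp p k os as = (\<Prod>i<k. p i (take (Suc i) os) (take i as) (as ! i))"

definition mixpol :: "real \<Rightarrow> ('o,'a) policy \<Rightarrow> ('o,'a) policy \<Rightarrow> ('o,'a) policy" where
  "mixpol al p1 p2 = (\<lambda>i os as a.
     if al * Rp p1 i os as + (1-al) * Rp p2 i os as = 0 then p1 i os as a
     else (al * Rp p1 i os as * p1 i os as a + (1-al) * Rp p2 i os as * p2 i os as a)
          / (al * Rp p1 i os as + (1-al) * Rp p2 i os as))"

lemma Rp_Suc: "Rp p (Suc k) os as = Rp p k os as * p k (take (Suc k) os) (take k as) (as!k)"
  by (simp add: Rp_def)

lemma Rp_take: "k \<le> m \<Longrightarrow> k \<le> m' \<Longrightarrow> Rp p k (take m os) (take m' as) = Rp p k os as"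
  unfolding Rp_def by (intro prod.cong refl) (simp add: min_def)

lemma Rp_nonneg: "is_policy n p \<Longrightarrow> k \<le> n \<Longrightarrow> Rp p k os as \<ge> 0"
  unfolding Rp_def is_policy_def by (intro prod_nonneg) auto

lemma mixpol_Rp:
  assumes p1: "is_policy n p1" and p2: "is_policy n p2" and al: "0 \<le> al" "al \<le> 1"
  shows "k \<le> n \<Longrightarrow> Rp (mixpol al p1 p2) k os as = al * Rp p1 k os as + (1-al) * Rp p2 k os as"
proof (induction k arbitrary: os as)
  case 0 then show ?case by (simp add: Rp_def)
next
  case (Suc k)
  define M where "M = al * Rp p1 k os as + (1-al) * Rp p2 k os as"
  have IH: "Rp (mixpol al p1 p2) k os as = M" using Suc by (simp add: M_def)
  have M': "al * Rp p1 k (take (Suc k) os) (take k as) + (1-al) * Rp p2 k (take (Suc k) os) (take k as) = M"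
    by (simp add: Rp_take M_def)
  have n1: "Rp p1 k os as \<ge> 0" "Rp p2 k os as \<ge> 0" using Rp_nonneg[OF p1] Rp_nonneg[OF p2] Suc by auto
  have q1: "p1 k (take (Suc k) os) (take k as) (as!k) \<ge> 0" "p2 k (take (Suc k) os) (take k as) (as!k) \<ge> 0"
    using p1 p2 Suc unfolding is_policy_def by auto
  show ?case
  proof (cases "M = 0")
    case True
    have "al * Rp p1 k os as = 0" "(1-al) * Rp p2 k os as = 0"
      using True n1 al unfolding M_def by (smt (verit) mult_nonneg_nonneg)+
    then have "al * (Rp p1 k os as * x) = 0" "(1-al) * (Rp p2 k os as * y) = 0" for x y by auto
    then show ?thesis using IH True unfolding Rp_Suc by (simp only: mult_zero_left mult.assoc[symmetric] add_0)
  next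
    case False
    have "mixpol al p1 p2 k (take (Suc k) os) (take k as) (as!k) =
       (al * Rp p1 k os as * p1 k (take (Suc k) os) (take k as) (as!k) + (1-al) * Rp p2 k os as * p2 k (take (Suc k) os) (take k as) (as!k)) / M"
      using False M' unfolding mixpol_def by (simp add: Rp_take)
    then have "Rp (mixpol al p1 p2) (Suc k) os as = M * ((al * Rp p1 k os as * p1 k (take (Suc k) os) (take k as) (as!k) + (1-al) * Rp p2 k os as * p2 k (take (Suc k) os) (take k as) (as!k)) / M)"
      using IH by (simp only: Rp_Suc)
    then show ?thesis using False by (simp add: Rp_Suc)
  qed
qed

lemma mixpol_policy:
  assumes p1: "is_policy n p1" and p2: "is_policy n p2" and al: "0 \<le> al" "al \<le> 1"
  shows "is_policy n (mixpol al p1 p2)"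
  unfolding is_policy_def
proof (intro allI impI conjI)
  fix i os as a assume i: "i < n"
  define M where "M = al * Rp p1 i os as + (1-al) * Rp p2 i os as"
  have n1: "Rp p1 i os as \<ge> 0" "Rp p2 i os as \<ge> 0" using Rp_nonneg[OF p1] Rp_nonneg[OF p2] i by auto
  have M0: "M \<ge> 0" using n1 al unfolding M_def by simp
  have q: "\<And>a. p1 i os as a \<ge> 0" "\<And>a. p2 i os as a \<ge> 0" "(\<Sum>a\<in>UNIV. p1 i os as a) = 1"
     "(\<Sum>a\<in>UNIV. p2 i os as a) = 1"
    using p1 p2 i unfolding is_policy_def by auto
  show "mixpol al p1 p2 i os as a \<ge> 0"
    using q n1 al M0 unfolding mixpol_def M_def[symmetric]
    by (auto intro!: divide_nonneg_nonneg add_nonneg_nonneg mult_nonneg_nonneg)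
  show "(\<Sum>a\<in>UNIV. mixpol al p1 p2 i os as a) = 1"
  proof (cases "M = 0")
    case True then show ?thesis using q unfolding mixpol_def M_def[symmetric] by simp
  next
    case False
    have "(\<Sum>a\<in>UNIV. mixpol al p1 p2 i os as a) =
       (\<Sum>a\<in>UNIV. al * Rp p1 i os as * p1 i os as a + (1-al) * Rp p2 i os as * p2 i os as a) / M"
      using False unfolding mixpol_def M_def[symmetric] by (simp add: sum_divide_distrib)
    also have "\<dots> = M / M"
      by (simp add: sum.distrib q(3,4) flip: sum_distrib_left add: M_def)
    finally show ?thesis using False by simp
  qed
qed

lemma jp_factor: "joint_prob D p ss os as =
  (init D (ss!0) * (\<Prod>i<horizon D. obsp D (ss!i) (os!i) * trans D (ss!i) (as!i) (ss!Suc i))) * Rp p (horizon D) os as"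
  unfolding joint_prob_def Rp_def by (simp add: prod.distrib[symmetric] mult_ac)

lemma eu_mix:
  assumes p1: "is_policy (horizon D) p1" and p2: "is_policy (horizon D) p2" and al: "0 \<le> al" "al \<le> 1"
  shows "expected_util D (mixpol al p1 p2) = al * expected_util D p1 + (1-al) * expected_util D p2"
proof -
  let ?Q = "\<lambda>ss os as. init D (ss!0) * (\<Prod>i<horizon D. obsp D (ss!i) (os!i) * trans D (ss!i) (as!i) (ss!Suc i))"
  let ?U = "\<lambda>ss. util D (take (horizon D) ss)"
  have "expected_util D (mixpol al p1 p2) =
    (\<Sum>ss\<in>{ss. length ss = Suc (horizon D)}. \<Sum>os\<in>{os. length os = horizon D}. \<Sum>as\<in>{as. length as = horizon D}.
       al * (?Q ss os as * Rp p1 (horizon D) os as * ?U ss) + (1-al) * (?Q ss os as * Rp p2 (horizon D) os as * ?U ss))"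
    unfolding expected_util_def jp_factor
    by (intro sum.cong refl) (simp add: mixpol_Rp[OF p1 p2 al] algebra_simps)
  also have "\<dots> = al * expected_util D p1 + (1-al) * expected_util D p2"
    unfolding expected_util_def jp_factor by (simp add: sum.distrib sum_distrib_left)
  finally show ?thesis .
qed

lemma all_isl: "\<forall>x\<in>set ss. isl x \<Longrightarrow> map Inl (map projl ss) = ss"
  by (induct ss) auto
lemma all_isr: "\<forall>x\<in>set ss. \<not> isl x \<Longrightarrow> map Inr (map projr ss) = ss"
  by (induct ss) auto

lemma adjacent:
  assumes "\<not> (\<forall>x\<in>set ss. isl x)" "\<not> (\<forall>x\<in>set ss. \<not> isl x)"
  shows "\<exists>i. Suc i < length ss \<and> isl (ss!i) \<noteq> isl (ss!Suc i)"
proof (rule ccontr)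
  assume "\<not> ?thesis"
  then have h: "\<And>i. Suc i < length ss \<Longrightarrow> isl (ss!i) = isl (ss!Suc i)" by blast
  have "j < length ss \<Longrightarrow> isl (ss!j) = isl (ss!0)" for j
    by (induction j) (use h in auto)
  then have "\<forall>x\<in>set ss. isl x = isl (ss!0)" by (auto simp: in_set_conv_nth)
  then show False using assms by (cases "isl (ss!0)") auto
qed

lemma jp_Inl:
  assumes "length xs = Suc (horizon D1)"
  shows "joint_prob (mixture w1 D1 w2 D2) p (map Inl xs) os as = w1 * joint_prob D1 p xs os as"
proof -
  have "(\<Prod>i<horizon D1. obsp (mixture w1 D1 w2 D2) (map Inl xs ! i) (os ! i) * p i (take (Suc i) os) (take i as) (as ! i) *
          trans (mixture w1 D1 w2 D2) (map Inl xs ! i) (as ! i) (map Inl xs ! Suc i))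
      = (\<Prod>i<horizon D1. obsp D1 (xs ! i) (os ! i) * p i (take (Suc i) os) (take i as) (as ! i) *
          trans D1 (xs ! i) (as ! i) (xs ! Suc i))"
    using assms by (intro prod.cong refl) (simp add: mixture_def nth_map)
  moreover have "init (mixture w1 D1 w2 D2) (map Inl xs ! 0) = w1 * init D1 (xs!0)"
    using assms by (simp add: mixture_def nth_map)
  ultimately show ?thesis unfolding joint_prob_def by (simp add: mixture_def)
qed

lemma jp_Inr:
  assumes "length xs = Suc (horizon D1)" "horizon D2 = horizon D1"
  shows "joint_prob (mixture w1 D1 w2 D2) p (map Inr xs) os as = w2 * joint_prob D2 p xs os as"
proof -
  have "(\<Prod>i<horizon D1. obsp (mixture w1 D1 w2 D2) (map Inr xs ! i) (os ! i) * p i (take (Suc i) os) (take i as) (as ! i) *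
          trans (mixture w1 D1 w2 D2) (map Inr xs ! i) (as ! i) (map Inr xs ! Suc i))
      = (\<Prod>i<horizon D1. obsp D2 (xs ! i) (os ! i) * p i (take (Suc i) os) (take i as) (as ! i) *
          trans D2 (xs ! i) (as ! i) (xs ! Suc i))"
    using assms by (intro prod.cong refl) (simp add: mixture_def nth_map)
  moreover have "init (mixture w1 D1 w2 D2) (map Inr xs ! 0) = w2 * init D2 (xs!0)"
    using assms by (simp add: mixture_def nth_map)
  ultimately show ?thesis using assms(2) unfolding joint_prob_def by (simp add: mixture_def)
qed

lemma jp_mixed:
  assumes "length ss = Suc (horizon D1)" "\<not> (\<forall>x\<in>set ss. isl x)" "\<not> (\<forall>x\<in>set ss. \<not> isl x)"
  shows "joint_prob (mixture w1 D1 w2 D2) p ss os as = 0"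
proof -
  obtain i where i: "Suc i < length ss" "isl (ss!i) \<noteq> isl (ss!Suc i)" using adjacent[OF assms(2,3)] by blast
  have "trans (mixture w1 D1 w2 D2) (ss!i) (as!i) (ss!Suc i) = 0"
    using i(2) by (cases "ss!i"; cases "ss!Suc i") (auto simp: mixture_def)
  then have "(\<Prod>i<horizon D1. obsp (mixture w1 D1 w2 D2) (ss ! i) (os ! i) * p i (take (Suc i) os) (take i as) (as ! i) *
          trans (mixture w1 D1 w2 D2) (ss ! i) (as ! i) (ss ! Suc i)) = 0"
    using i(1) assms(1) by (intro prod_zero) auto
  then show ?thesis unfolding joint_prob_def by (simp add: mixture_def)
qed

lemma map_Inl_Inr: "xs \<noteq> [] \<Longrightarrow> map Inl xs \<noteq> map Inr ys"
  by (cases xs; cases ys) auto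

lemma eu_mixture:
  fixes D1 :: "('s1::finite, 'a::finite, 'o::finite) pomdp" and D2 :: "('s2::finite, 'a, 'o) pomdp"
  assumes n: "horizon D1 > 0" and h: "horizon D2 = horizon D1"
  shows "expected_util (mixture w1 D1 w2 D2) p = w1 * expected_util D1 p + w2 * expected_util D2 p"
proof -
  let ?D = "mixture w1 D1 w2 D2"
  let ?n = "horizon D1"
  have hD: "horizon ?D = ?n" by (simp add: mixture_def)
  define F where "F ss = (\<Sum>os\<in>{os. length os = ?n}. \<Sum>as\<in>{as. length as = ?n}.
           joint_prob ?D p ss os as * util ?D (take ?n ss))" for ss
  let ?L = "{ss::('s1+'s2) list. length ss = Suc ?n}"
  let ?L1 = "{ss::'s1 list. length ss = Suc ?n}"
  let ?L2 = "{ss::'s2 list. length ss = Suc ?n}"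
  have E: "expected_util ?D p = sum F ?L" unfolding expected_util_def hD F_def ..
  have fin: "finite ?L" using finite_lists_length_eq[of "UNIV::('s1+'s2) set"] by simp
  have sub: "map Inl ` ?L1 \<union> map Inr ` ?L2 \<subseteq> ?L" by auto
  have zero: "\<forall>ss\<in>?L - (map Inl ` ?L1 \<union> map Inr ` ?L2). F ss = 0"
  proof
    fix ss assume ss: "ss \<in> ?L - (map Inl ` ?L1 \<union> map Inr ` ?L2)"
    have "\<not> (\<forall>x\<in>set ss. isl x)"
    proof
      assume "\<forall>x\<in>set ss. isl x"
      then have "ss = map Inl (map projl ss)" using all_isl by metis
      then show False using ss by (metis (mono_tags, lifting) DiffD1 DiffD2 UnI1 imageI length_map mem_Collect_eq)
    qed
    moreover have "\<not> (\<forall>x\<in>set ss. \<not> isl x)"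
    proof
      assume "\<forall>x\<in>set ss. \<not> isl x"
      then have "ss = map Inr (map projr ss)" using all_isr by metis
      then show False using ss by (metis (mono_tags, lifting) DiffD1 DiffD2 UnI2 imageI length_map mem_Collect_eq)
    qed
    ultimately show "F ss = 0" using ss unfolding F_def by (simp add: jp_mixed)
  qed
  have "sum F ?L = sum F (map Inl ` ?L1 \<union> map Inr ` ?L2)"
    using sum.mono_neutral_right[OF fin sub zero] .
  also have "\<dots> = sum F (map Inl ` ?L1) + sum F (map Inr ` ?L2)"
  proof (rule sum.union_disjoint)
    show "finite (map Inl ` ?L1)" "finite (map Inr ` ?L2)"
      using finite_lists_length_eq[of "UNIV::'s1 set"] finite_lists_length_eq[of "UNIV::'s2 set"] by auto
    show "map Inl ` ?L1 \<inter> map Inr ` ?L2 = {}"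
    proof (rule ccontr)
      assume "map Inl ` ?L1 \<inter> map Inr ` ?L2 \<noteq> {}"
      then obtain xa :: "'s1 list" and xb :: "'s2 list" where "(map Inl xa :: ('s1+'s2) list) = map Inr xb" "length xa = Suc ?n" by auto
      then show False using map_Inl_Inr[of xa xb] by force
    qed
  qed
  also have "sum F (map Inl ` ?L1) = sum (F \<circ> map Inl) ?L1"
    by (rule sum.reindex) (simp add: inj_on_def)
  also have "sum F (map Inr ` ?L2) = sum (F \<circ> map Inr) ?L2"
    by (rule sum.reindex) (simp add: inj_on_def)
  also have "sum (F \<circ> map Inl) ?L1 = w1 * expected_util D1 p"
  proof -
    have "(F \<circ> map Inl) xs = w1 * (\<Sum>os\<in>{os. length os = ?n}. \<Sum>as\<in>{as. length as = ?n}.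
           joint_prob D1 p xs os as * util D1 (take ?n xs))" if xs: "xs \<in> ?L1" for xs
    proof -
      have u: "util ?D (take ?n (map Inl xs)) = util D1 (take ?n xs)"
        by (simp add: mixture_def mix_util_def take_map comp_def)
      show ?thesis
        using xs unfolding F_def o_def u by (simp add: jp_Inl sum_distrib_left mult.assoc)
    qed
    then have "sum (F \<circ> map Inl) ?L1 = (\<Sum>xs\<in>?L1. w1 * (\<Sum>os\<in>{os. length os = ?n}. \<Sum>as\<in>{as. length as = ?n}.
           joint_prob D1 p xs os as * util D1 (take ?n xs)))" by (rule sum.cong[OF refl])
    then show ?thesis unfolding expected_util_def sum_distrib_left[symmetric] .
  qed
  also have "sum (F \<circ> map Inr) ?L2 = w2 * expected_util D2 p"
  proof -
    have "(F \<circ> map Inr) xs = w2 * (\<Sum>os\<in>{os. length os = ?n}. \<Sum>as\<in>{as. length as = ?n}.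
           joint_prob D2 p xs os as * util D2 (take ?n xs))" if xs: "xs \<in> ?L2" for xs
    proof -
      have u: "util ?D (take ?n (map Inr xs)) = util D2 (take ?n xs)"
        using n xs by (simp add: mixture_def mix_util_def take_map comp_def) (metis Suc_leI length_greater_0_conv less_Suc_eq list.set_sel(1) take_eq_Nil2 zero_less_Suc)
      show ?thesis
        using xs h unfolding F_def o_def u by (simp add: jp_Inr sum_distrib_left mult.assoc)
    qed
    then have "sum (F \<circ> map Inr) ?L2 = (\<Sum>xs\<in>?L2. w2 * (\<Sum>os\<in>{os. length os = ?n}. \<Sum>as\<in>{as. length as = ?n}.
           joint_prob D2 p xs os as * util D2 (take ?n xs)))" by (rule sum.cong[OF refl])
    then show ?thesis unfolding expected_util_def h sum_distrib_left[symmetric] .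
  qed
  finally show ?thesis using E by simp
qed



lemma frac_le_pos: "(y::real) > 0 \<Longrightarrow> z > 0 \<Longrightarrow> x * z \<le> w * y \<Longrightarrow> x / y \<le> w / z"
  by (subst frac_le_eq) (auto intro: divide_nonpos_pos)

lemma sep_claim:
  fixes f g :: "'p \<Rightarrow> real"
  assumes conv: "\<And>p q t. P p \<Longrightarrow> P q \<Longrightarrow> 0 \<le> t \<Longrightarrow> t \<le> 1 \<Longrightarrow>
      \<exists>r. P r \<and> f r = t * f p + (1-t) * f q \<and> g r = t * g p + (1-t) * g q"
    and nodom: "\<And>q. P q \<Longrightarrow> f q \<le> a \<or> g q \<le> b"
    and u: "P u" "f u > a" and v: "P v" "g v > b"
  shows "(g v - b) * (f u - a) \<le> (g u - b) * (f v - a)"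
proof (rule ccontr)
  assume H: "\<not> ?thesis"
  define U1 where "U1 = f u - a"
  define U2 where "U2 = g u - b"
  define V1 where "V1 = f v - a"
  define V2 where "V2 = g v - b"
  have U1: "U1 > 0" using u by (simp add: U1_def)
  have U2: "U2 \<le> 0" using u nodom[of u] by (auto simp: U2_def)
  have V2: "V2 > 0" using v by (simp add: V2_def)
  have V1: "V1 \<le> 0" using v nodom[of v] by (auto simp: V1_def)
  have H': "V2 * U1 > U2 * V1" using H by (simp add: U1_def U2_def V1_def V2_def)
  define den where "den = U1 - U2 + V2 - V1"
  have den: "den > 0" using U1 U2 V1 V2 by (simp add: den_def)
  define t where "t = (V2 - V1) / den"
  have t0: "0 \<le> t" using den V1 V2 by (simp add: t_def)
  have t1: "t \<le> 1" using den U1 U2 by (simp add: t_def den_def)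
  obtain r where r: "P r" "f r = t * f u + (1-t) * f v" "g r = t * g u + (1-t) * g v"
    using conv[OF u(1) v(1) t0 t1] by blast
  have e1: "f r - a = t * U1 + (1-t) * V1" using r by (simp add: U1_def V1_def algebra_simps)
  have e2: "g r - b = t * U2 + (1-t) * V2" using r by (simp add: U2_def V2_def algebra_simps)
  have omt: "1 - t = (U1 - U2) / den"
  proof -
    have "1 - t = (den - (V2 - V1))/den" using den unfolding t_def by (simp add: diff_divide_distrib)
    also have "den - (V2 - V1) = U1 - U2" unfolding den_def by simp
    finally show ?thesis .
  qed
  have "t * U1 + (1-t) * V1 = ((V2 - V1) * U1 + (U1 - U2) * V1) / den"
    by (simp only: omt) (simp add: t_def add_divide_distrib)
  also have "\<dots> = (V2 * U1 - U2 * V1) / den" by (simp add: algebra_simps)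
  also have "\<dots> > 0" using H' den by simp
  finally have "f r > a" using e1 by simp
  moreover have "t * U2 + (1-t) * V2 = ((V2 - V1) * U2 + (U1 - U2) * V2) / den"
    by (simp only: omt) (simp add: t_def add_divide_distrib)
  moreover have "((V2 - V1) * U2 + (U1 - U2) * V2) / den = (V2 * U1 - U2 * V1) / den" by (simp add: algebra_simps)
  moreover have "(V2 * U1 - U2 * V1) / den > 0" using H' den by simp
  ultimately have "g r > b" using e2 by simp
  moreover note \<open>f r > a\<close>
  ultimately show False using nodom[OF r(1)] by simp
qed

lemma sep2d:
  fixes f g :: "'p \<Rightarrow> real"
  assumes conv: "\<And>p q t. P p \<Longrightarrow> P q \<Longrightarrow> 0 \<le> t \<Longrightarrow> t \<le> 1 \<Longrightarrow>
      \<exists>r. P r \<and> f r = t * f p + (1-t) * f q \<and> g r = t * g p + (1-t) * g q"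
    and nodom: "\<And>q. P q \<Longrightarrow> f q \<le> a \<or> g q \<le> b"
  shows "\<exists>w1 w2. w1 \<ge> 0 \<and> w2 \<ge> 0 \<and> w1 + w2 = 1 \<and> (\<forall>q. P q \<longrightarrow> w1 * f q + w2 * g q \<le> w1 * a + w2 * b)"
proof (cases "\<exists>u. P u \<and> f u > a")
  case False
  show ?thesis apply (rule exI[of _ "1::real"], rule exI[of _ "0::real"]) using False by (auto simp: not_less)
next
  case True
  then obtain u0 where u0: "P u0" "f u0 > a" by blast
  show ?thesis
  proof (cases "\<exists>v. P v \<and> g v > b")
    case False
    show ?thesis apply (rule exI[of _ "0::real"], rule exI[of _ "1::real"]) using False by (auto simp: not_less)
  next
    case True
    then obtain v0 where v0: "P v0" "g v0 > b" by blast
    have cl: "(g v - b) * (f u - a) \<le> (g u - b) * (f v - a)" if "P u" "f u > a" "P v" "g v > b" for u v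
      by (rule sep_claim[OF conv nodom that])
    have fv: "f v < a" if "P v" "g v > b" for v
    proof -
      have "g u0 - b \<le> 0" using nodom[OF u0(1)] u0(2) by auto
      have "f v \<le> a" using nodom[OF that(1)] that(2) by auto
      moreover have "f v \<noteq> a"
      proof
        assume "f v = a"
        then have "(g v - b) * (f u0 - a) \<le> 0" using cl[OF u0 that] by simp
        moreover have "(g v - b) * (f u0 - a) > 0" using that u0 by simp
        ultimately show False by simp
      qed
      ultimately show ?thesis by simp
    qed
    define A where "A = {(b - g u) / (f u - a) | u. P u \<and> f u > a}"
    define c where "c = Inf A"
    have Ane: "A \<noteq> {}" using u0 by (auto simp: A_def)
    have lb: "(g v - b) / (a - f v) \<le> x" if "x \<in> A" "P v" "g v > b" for x v
    proof -
      obtain u where u: "x = (b - g u) / (f u - a)" "P u" "f u > a" using \<open>x \<in> A\<close> by (auto simp: A_def)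
      have "(g v - b) * (f u - a) \<le> (b - g u) * (a - f v)" using cl[OF u(2,3) that(2,3)] by (simp add: algebra_simps)
      then show ?thesis unfolding u(1) using u(3) fv[OF that(2,3)] by (intro frac_le_pos) auto
    qed
    have bdd: "bdd_below A" using lb[OF _ v0] by (auto simp: bdd_below_def)
    have c_le: "c \<le> (b - g u) / (f u - a)" if "P u" "f u > a" for u
      unfolding c_def by (rule cInf_lower[OF _ bdd]) (use that in \<open>auto simp: A_def\<close>)
    have c_ge: "(g v - b) / (a - f v) \<le> c" if "P v" "g v > b" for v
      unfolding c_def by (rule cInf_greatest[OF Ane]) (use lb that in blast)
    have c0: "c \<ge> 0"
    proof -
      have "(g v0 - b) / (a - f v0) > 0" using v0 fv[OF v0] by simp
      then show ?thesis using c_ge[OF v0] by simp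
    qed
    have key: "c * (f q - a) + (g q - b) \<le> 0" if "P q" for q
    proof -
      consider "f q > a" | "g q > b" | "f q \<le> a" "g q \<le> b" by linarith
      then show ?thesis
      proof cases
        case 1
        have "f q - a > 0" using 1 by simp
        then have "c * (f q - a) \<le> b - g q" using c_le[OF that 1] by (simp add: pos_le_divide_eq)
        then show ?thesis by simp
      next
        case 2
        have "a - f q > 0" using fv[OF that 2] by simp
        then have "g q - b \<le> c * (a - f q)" using c_ge[OF that 2] by (simp add: pos_divide_le_eq mult.commute)
        then show ?thesis by (simp add: algebra_simps)
      next
        case 3
        have "c * (f q - a) \<le> 0" using c0 3 by (intro mult_nonneg_nonpos) auto
        then show ?thesis using 3 by simp
      qed
    qed
    show ?thesis
    proof (rule exI[of _ "c / (1 + c)"], rule exI[of _ "1 / (1 + c)"], intro conjI allI impI)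
      show "c / (1 + c) \<ge> 0" "1 / (1 + c) \<ge> 0" using c0 by auto
      show "c / (1 + c) + 1 / (1 + c) = 1" using c0 by (simp add: field_simps)
      fix q assume "P q"
      then have "c * f q + g q \<le> c * a + b" using key by (simp add: algebra_simps)
      then have "(c * f q + g q) / (1 + c) \<le> (c * a + b) / (1 + c)" using c0 by (intro divide_right_mono) auto
      then show "c / (1 + c) * f q + 1 / (1 + c) * g q \<le> c / (1 + c) * a + 1 / (1 + c) * b"
        by (simp add: add_divide_distrib)
    qed
  qed
qed


lemma eu_h0: "horizon D = 0 \<Longrightarrow> expected_util D p = expected_util D q"
  unfolding expected_util_def joint_prob_def by simp

lemma pos_comb:
  fixes w1 w2 x y :: real
  assumes "w1 \<ge> 0" "w2 \<ge> 0" "w1 + w2 = 1" "x > 0" "y > 0"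
  shows "w1 * x + w2 * y > 0"
proof (cases "w1 > 0")
  case True
  then show ?thesis using assms by (smt (verit) mult_pos_pos mult_nonneg_nonneg)
next
  case False
  then have "w2 = 1" using assms by simp
  then show ?thesis using assms False by simp
qed

theorem lemma2:
  fixes D1 :: "('s1::finite, 'a::finite, 'o::finite) pomdp"
    and D2 :: "('s2::finite, 'a, 'o) pomdp"
    and \<pi> :: "('o, 'a) policy"
  assumes "is_pomdp D1" and "is_pomdp D2" and "compatible D1 D2"
    and "is_policy (horizon D1) \<pi>"
  shows "pareto_optimal D1 D2 \<pi> \<longleftrightarrow>
         (\<exists>w1 w2. w1 \<ge> 0 \<and> w2 \<ge> 0 \<and> w1 + w2 = 1 \<and>
                  optimal_policy (mixture w1 D1 w2 D2) \<pi>)"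
proof -
  have h: "horizon D2 = horizon D1" using assms(3) by (simp add: compatible_def)
  have hm: "horizon (mixture w1 D1 w2 D2) = horizon D1" for w1 w2 by (simp add: mixture_def)
  show ?thesis
  proof (cases "horizon D1 = 0")
    case True
    have "pareto_optimal D1 D2 \<pi>"
      unfolding pareto_optimal_def using eu_h0[OF True] by (metis order_refl)
    moreover have "optimal_policy (mixture 1 D1 0 D2) \<pi>"
    proof -
      have "horizon (mixture 1 D1 0 D2) = 0" using True hm by simp
      from eu_h0[OF this] show ?thesis unfolding optimal_policy_def by (metis order_refl)
    qed
    ultimately show ?thesis by (metis add_0_right order_refl zero_le_one)
  next
    case False
    then have n: "horizon D1 > 0" by simp
    show ?thesis
    proof
      assume po: "pareto_optimal D1 D2 \<pi>"
      have "\<exists>w1 w2. w1 \<ge> 0 \<and> w2 \<ge> 0 \<and> w1 + w2 = 1 \<and>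
          (\<forall>q. is_policy (horizon D1) q \<longrightarrow> w1 * expected_util D1 q + w2 * expected_util D2 q
              \<le> w1 * expected_util D1 \<pi> + w2 * expected_util D2 \<pi>)"
      proof (rule sep2d)
        fix p q :: "('o, 'a) policy" and t :: real
        assume p: "is_policy (horizon D1) p" and q: "is_policy (horizon D1) q" and t: "0 \<le> t" "t \<le> 1"
        show "\<exists>r. is_policy (horizon D1) r \<and> expected_util D1 r = t * expected_util D1 p + (1 - t) * expected_util D1 q
              \<and> expected_util D2 r = t * expected_util D2 p + (1 - t) * expected_util D2 q"
          using mixpol_policy[OF p q t] eu_mix[of D1 p q t] eu_mix[of D2 p q t] p q t h by auto
      next
        fix q :: "('o, 'a) policy" assume "is_policy (horizon D1) q"
        then show "expected_util D1 q \<le> expected_util D1 \<pi> \<or> expected_util D2 q \<le> expected_util D2 \<pi>"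
          using po unfolding pareto_optimal_def by auto
      qed
      then obtain w1 w2 where w: "w1 \<ge> 0" "w2 \<ge> 0" "w1 + w2 = 1" and
        le: "\<And>q. is_policy (horizon D1) q \<Longrightarrow> w1 * expected_util D1 q + w2 * expected_util D2 q
              \<le> w1 * expected_util D1 \<pi> + w2 * expected_util D2 \<pi>" by blast
      have "optimal_policy (mixture w1 D1 w2 D2) \<pi>"
        unfolding optimal_policy_def hm eu_mixture[OF n h] using le by blast
      then show "\<exists>w1 w2. w1 \<ge> 0 \<and> w2 \<ge> 0 \<and> w1 + w2 = 1 \<and> optimal_policy (mixture w1 D1 w2 D2) \<pi>"
        using w by blast
    next
      assume "\<exists>w1 w2. w1 \<ge> 0 \<and> w2 \<ge> 0 \<and> w1 + w2 = 1 \<and> optimal_policy (mixture w1 D1 w2 D2) \<pi>"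
      then obtain w1 w2 where w: "w1 \<ge> 0" "w2 \<ge> 0" "w1 + w2 = 1" and
        op: "optimal_policy (mixture w1 D1 w2 D2) \<pi>" by blast
      show "pareto_optimal D1 D2 \<pi>"
        unfolding pareto_optimal_def
      proof (intro allI impI)
        fix q :: "('o, 'a) policy" assume q: "is_policy (horizon D1) q"
        show "expected_util D1 q \<le> expected_util D1 \<pi> \<or> expected_util D2 q \<le> expected_util D2 \<pi>"
        proof (rule ccontr)
          assume "\<not> ?thesis"
          then have "w1 * (expected_util D1 q - expected_util D1 \<pi>) + w2 * (expected_util D2 q - expected_util D2 \<pi>) > 0"
            using w by (intro pos_comb) auto
          moreover have "w1 * expected_util D1 q + w2 * expected_util D2 q \<le> w1 * expected_util D1 \<pi> + w2 * expected_util D2 \<pi>"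
            using op q unfolding optimal_policy_def hm eu_mixture[OF n h] by blast
          ultimately show False by (simp add: algebra_simps)
        qed
      qed
    qed
  qed
qed

end
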